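(* IO-acyclicity and boundedness are not sufficient to guarantee that a (cooperative) multiagent system is stabilizing: there exist IO-acyclic and bounded multiagent systems that are not stabilizing.
   Context: Fix a Herbrand base $HB$. A logic program is a set of ground clauses $H\leftarrow L_1,\dots,L_m$; $S$ is a stable model of $P$ if $S$ is the least model of the reduct $P^S$. The atom dependency graph of $P$ has an edge from $a$ to $b$ iff some clause with head $a$ has $b$ or $\neg b$ in its body; $b$ is relevant to $a$ if there is a path from $a$ to $b$. $P$ is acyclic if the graph has no infinite path, bounded if each atom's definition is finite. An agent is $A=(IDB,HBE,HIN,\delta)$ with $IDB$ acyclic, $HBE$ sensed environment atoms, $HIN$ input atoms (neither appearing as heads in $IDB$, disjoint), initial state $\delta$; a state is $(EDB,IN)$, $EDB\subseteq HBE$, $IN\subseteq HIN$, and the agent's stable model at it is that of $IDB\cup EDB\cup IN$. A cooperative multiagent system $\mathcal A=(A_1,\dots,A_n)$ requires shared heads to have identical definitions, $HIN_i\subseteq\bigcup_j(head(IDB_j)\cup HBE_j)$, and no environment atom as a head in any $IDB_j$. $HB_i=head(IDB_i)\cup HBE_i\cup HIN_i$; $D(i,j)=HIN_i\cap(head(IDB_j)\cup HBE_j)$. An environment change $(T,F)$ updates each $EDB_i$ to $(EDB_i\setminus(F\cap HBE_i))\cup(T\cap HBE_i)$; a communication $j\leadsto i$ sets $IN_i$ to $(IN_i\setminus D(i,j))\cup(D(i,j)\cap M_j)$ with $M_j$ the current stable model of $A_j$. A run is an infinite sequence of such transitions from the initial state in which each $j\leadsto i$ with $D(i,j)\ne\emptyset$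 occurs infinitely often and environment changes stop after some point. $M_{i,k}$ denotes $A_i$'s stable model at point $k$; the stabilized environment is the union of the final $EDB_i$. $IDB_{\mathcal A}=\bigcup_i IDB_i$. The I/O graph is the atom dependency graph of $IDB_{\mathcal A}$ restricted to atoms relevant to some input atom; $\mathcal A$ is IO-acyclic if it has no infinite path, bounded if $IDB_{\mathcal A}$ is bounded. A run is convergent if for every atom $a$, from some point on either all agents with $a\in HB_i$ have $a\in M_{i,k}$ or all have $a\notin M_{i,k}$; strongly convergent if also from some point all $M_{i,k}$ stay constant. $Conv(\mathcal R)$ is the set of atoms eventually true in this sense. Weakly stabilizing: every run convergent and $Conv(\mathcal R)$ a stable model of $IDB_{\mathcal A}\cup EDB$ ($EDB$ the stabilized environment). Stabilizing: weakly stabilizing and every run strongly convergent. *)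

theory Defs
  imports Main
begin

text \<open>A ground clause  H <- B1,...,Bk, not C1,...,not Cl  is Clause H [B1..Bk] [C1..Cl].
  Atoms are elements of the type 'a (the Herbrand base is UNIV).\<close>
datatype 'a clause = Clause (chead: 'a) (cpos: "'a list") (cneg: "'a list")

type_synonym 'a program = "'a clause set"

definition heads :: "'a program \<Rightarrow> 'a set" where
  "heads P = chead ` P"

definition def_of :: "'a program \<Rightarrow> 'a \<Rightarrow> 'a program" where
  "def_of P a = {c \<in> P. chead c = a}"

definition facts :: "'a set \<Rightarrow> 'a program" where
  "facts X = {Clause a [] [] | a. a \<in> X}"

definition reduct :: "'a program \<Rightarrow> 'a set \<Rightarrow> 'a program" where
  "reduct P S = {Clause h p [] | h p n. Clause h p n \<in> P \<and> set n \<inter> S = {}}"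

definition is_def_model :: "'a program \<Rightarrow> 'a set \<Rightarrow> bool" where
  "is_def_model P I \<longleftrightarrow> (\<forall>c\<in>P. set (cpos c) \<subseteq> I \<longrightarrow> chead c \<in> I)"

definition least_model :: "'a program \<Rightarrow> 'a set" where
  "least_model P = \<Inter> {I. is_def_model P I}"

definition stable_model :: "'a program \<Rightarrow> 'a set \<Rightarrow> bool" where
  "stable_model P S \<longleftrightarrow> S = least_model (reduct P S)"

definition dep :: "'a program \<Rightarrow> 'a \<Rightarrow> 'a \<Rightarrow> bool" where
  "dep P a b \<longleftrightarrow> (\<exists>c\<in>P. chead c = a \<and> (b \<in> set (cpos c) \<or> b \<in> set (cneg c)))"

definition relevant :: "'a program \<Rightarrow> 'a \<Rightarrow> 'a \<Rightarrow> bool" where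
  "relevant P b a \<longleftrightarrow> (dep P)\<^sup>*\<^sup>* a b"

definition acyclic_prog :: "'a program \<Rightarrow> bool" where
  "acyclic_prog P \<longleftrightarrow> \<not> (\<exists>f::nat \<Rightarrow> 'a. \<forall>k. dep P (f k) (f (Suc k)))"

definition bounded_prog :: "'a program \<Rightarrow> bool" where
  "bounded_prog P \<longleftrightarrow> (\<forall>a. finite (def_of P a))"

record 'a agent =
  IDB :: "'a program"
  HBE :: "'a set"
  HIN :: "'a set"
  init_EDB :: "'a set"
  init_IN :: "'a set"

type_synonym 'a astate = "'a set \<times> 'a set"  \<comment> \<open>(EDB, IN)\<close>

definition wf_agent :: "'a agent \<Rightarrow> bool" where
  "wf_agent A \<longleftrightarrow> acyclic_prog (IDB A)
     \<and> HBE A \<inter> heads (IDB A) = {} \<and> HIN A \<inter> heads (IDB A) = {}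
     \<and> HBE A \<inter> HIN A = {}
     \<and> init_EDB A \<subseteq> HBE A \<and> init_IN A \<subseteq> HIN A"

text \<open>The (unique, since the program is acyclic) stable model of the agent at a state.\<close>
definition agent_model :: "'a agent \<Rightarrow> 'a astate \<Rightarrow> 'a set" where
  "agent_model A st = (THE S. stable_model (IDB A \<union> facts (fst st) \<union> facts (snd st)) S)"

type_synonym 'a mas = "'a agent list"

definition HB_ag :: "'a agent \<Rightarrow> 'a set" where
  "HB_ag A = heads (IDB A) \<union> HBE A \<union> HIN A"

definition coop_mas :: "'a mas \<Rightarrow> bool" where
  "coop_mas As \<longleftrightarrow>
     (\<forall>i<length As. wf_agent (As ! i))
   \<and> (\<forall>i<length As. \<forall>j<length As. \<forall>a \<in> heads (IDB (As ! i)) \<inter> heads (IDB (As ! j)).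
        def_of (IDB (As ! i)) a = def_of (IDB (As ! j)) a)
   \<and> (\<forall>i<length As. HIN (As ! i) \<subseteq> (\<Union>j<length As. heads (IDB (As ! j)) \<union> HBE (As ! j)))
   \<and> (\<forall>i<length As. \<forall>j<length As. HBE (As ! i) \<inter> heads (IDB (As ! j)) = {})"

definition Dep :: "'a mas \<Rightarrow> nat \<Rightarrow> nat \<Rightarrow> 'a set" where
  "Dep As i j = HIN (As ! i) \<inter> (heads (IDB (As ! j)) \<union> HBE (As ! j))"

definition IDB_mas :: "'a mas \<Rightarrow> 'a program" where
  "IDB_mas As = (\<Union>i<length As. IDB (As ! i))"

definition input_atoms :: "'a mas \<Rightarrow> 'a set" where
  "input_atoms As = (\<Union>i<length As. HIN (As ! i))"

definition io_nodes :: "'a mas \<Rightarrow> 'a set" where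
  "io_nodes As = {b. \<exists>h \<in> input_atoms As. relevant (IDB_mas As) b h}"

definition io_edge :: "'a mas \<Rightarrow> 'a \<Rightarrow> 'a \<Rightarrow> bool" where
  "io_edge As a b \<longleftrightarrow> a \<in> io_nodes As \<and> b \<in> io_nodes As \<and> dep (IDB_mas As) a b"

definition io_acyclic :: "'a mas \<Rightarrow> bool" where
  "io_acyclic As \<longleftrightarrow> \<not> (\<exists>f::nat \<Rightarrow> 'a. \<forall>k. io_edge As (f k) (f (Suc k)))"

definition bounded_mas :: "'a mas \<Rightarrow> bool" where
  "bounded_mas As \<longleftrightarrow> bounded_prog (IDB_mas As)"

text \<open>Env T F: environment change; Comm j i: communication j ~> i.\<close>
datatype 'a label = Env "'a set" "'a set" | Comm nat nat

fun is_env :: "'a label \<Rightarrow> bool" where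
  "is_env (Env _ _) = True"
| "is_env (Comm _ _) = False"

type_synonym 'a sstate = "nat \<Rightarrow> 'a astate"

fun step :: "'a mas \<Rightarrow> 'a label \<Rightarrow> 'a sstate \<Rightarrow> 'a sstate" where
  "step As (Env T F) st =
     (\<lambda>i. ((fst (st i) - (F \<inter> HBE (As ! i))) \<union> (T \<inter> HBE (As ! i)), snd (st i)))"
| "step As (Comm j i) st =
     st(i := (fst (st i), (snd (st i) - Dep As i j) \<union> (Dep As i j \<inter> agent_model (As ! j) (st j))))"

primrec run_state :: "'a mas \<Rightarrow> (nat \<Rightarrow> 'a label) \<Rightarrow> nat \<Rightarrow> 'a sstate" where
  "run_state As lab 0 = (\<lambda>i. (init_EDB (As ! i), init_IN (As ! i)))"
| "run_state As lab (Suc k) = step As (lab k) (run_state As lab k)"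

definition is_run :: "'a mas \<Rightarrow> (nat \<Rightarrow> 'a label) \<Rightarrow> bool" where
  "is_run As lab \<longleftrightarrow>
     (\<forall>k i j. lab k = Comm j i \<longrightarrow> i < length As \<and> j < length As)
   \<and> (\<forall>i<length As. \<forall>j<length As. Dep As i j \<noteq> {} \<longrightarrow> (\<forall>k. \<exists>k'\<ge>k. lab k' = Comm j i))
   \<and> (\<exists>k0. \<forall>k\<ge>k0. \<not> is_env (lab k))"

definition Mod :: "'a mas \<Rightarrow> (nat \<Rightarrow> 'a label) \<Rightarrow> nat \<Rightarrow> nat \<Rightarrow> 'a set" where
  "Mod As lab i k = agent_model (As ! i) (run_state As lab k i)"

definition convergent :: "'a mas \<Rightarrow> (nat \<Rightarrow> 'a label) \<Rightarrow> bool" where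
  "convergent As lab \<longleftrightarrow> (\<forall>a. \<exists>k0.
      (\<forall>k\<ge>k0. \<forall>i<length As. a \<in> HB_ag (As ! i) \<longrightarrow> a \<in> Mod As lab i k)
    \<or> (\<forall>k\<ge>k0. \<forall>i<length As. a \<in> HB_ag (As ! i) \<longrightarrow> a \<notin> Mod As lab i k))"

definition strongly_convergent :: "'a mas \<Rightarrow> (nat \<Rightarrow> 'a label) \<Rightarrow> bool" where
  "strongly_convergent As lab \<longleftrightarrow> convergent As lab \<and>
     (\<exists>k0. \<forall>k\<ge>k0. \<forall>i<length As. Mod As lab i k = Mod As lab i k0)"

definition Conv :: "'a mas \<Rightarrow> (nat \<Rightarrow> 'a label) \<Rightarrow> 'a set" where
  "Conv As lab = {a. (\<exists>i<length As. a \<in> HB_ag (As ! i)) \<and>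
     (\<exists>k0. \<forall>k\<ge>k0. \<forall>i<length As. a \<in> HB_ag (As ! i) \<longrightarrow> a \<in> Mod As lab i k)}"

definition env_stop :: "(nat \<Rightarrow> 'a label) \<Rightarrow> nat" where
  "env_stop lab = (LEAST k0. \<forall>k\<ge>k0. \<not> is_env (lab k))"

definition stab_env :: "'a mas \<Rightarrow> (nat \<Rightarrow> 'a label) \<Rightarrow> 'a set" where
  "stab_env As lab = (\<Union>i<length As. fst (run_state As lab (env_stop lab) i))"

definition weakly_stabilizing :: "'a mas \<Rightarrow> bool" where
  "weakly_stabilizing As \<longleftrightarrow> (\<forall>lab. is_run As lab \<longrightarrow>
      convergent As lab \<and>
      stable_model (IDB_mas As \<union> facts (stab_env As lab)) (Conv As lab))"

definition stabilizing :: "'a mas \<Rightarrow> bool" where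
  "stabilizing As \<longleftrightarrow> weakly_stabilizing As \<and>
     (\<forall>lab. is_run As lab \<longrightarrow> strongly_convergent As lab)"

end

theory Submission
  imports Defs
begin

definition P0 :: "nat program" where
  "P0 = {Clause (Suc n) [n] [] | n. odd n}"

definition P1 :: "nat program" where
  "P1 = {Clause (Suc n) [n] [] | n. even n}"

definition A0 :: "nat agent" where
  "A0 = \<lparr>IDB = P0, HBE = {0}, HIN = {x. odd x}, init_EDB = {0}, init_IN = {}\<rparr>"

definition A1 :: "nat agent" where
  "A1 = \<lparr>IDB = P1, HBE = {}, HIN = {x. even x}, init_EDB = {}, init_IN = {}\<rparr>"

definition AS :: "nat mas" where
  "AS = [A0, A1]"

definition labs :: "nat \<Rightarrow> nat label" where
  "labs k = (if even k then Comm 0 1 else Comm 1 0)"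

lemma all_less_2: "(\<forall>i<Suc (Suc 0). P i) \<longleftrightarrow> P 0 \<and> P (Suc 0)"
  by (auto simp: less_Suc_eq)

lemma heads_P0: "heads P0 = {x. even x \<and> x \<noteq> 0}"
proof -
  have "x \<in> heads P0" if "even x" "x \<noteq> 0" for x
  proof -
    have "Clause (Suc (x - 1)) [x - 1] [] \<in> P0" using that by (auto simp: P0_def)
    then show ?thesis using that unfolding heads_def by (metis Suc_pred' bot_nat_0.not_eq_extremum clause.sel(1) image_eqI)
  qed
  moreover have "x \<in> heads P0 \<Longrightarrow> even x \<and> x \<noteq> 0" for x
    by (auto simp: heads_def P0_def)
  ultimately show ?thesis by blast
qed

lemma heads_P1: "heads P1 = {x. odd x}"
proof -
  have "x \<in> heads P1" if "odd x" for x
  proof -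
    have "Clause (Suc (x - 1)) [x - 1] [] \<in> P1" using that by (auto simp: P1_def)
    then show ?thesis using that unfolding heads_def
      by (metis One_nat_def Suc_pred clause.sel(1) image_eqI odd_pos)
  qed
  moreover have "x \<in> heads P1 \<Longrightarrow> odd x" for x
    by (auto simp: heads_def P1_def)
  ultimately show ?thesis by blast
qed

lemma dep_P0: "dep P0 a b \<Longrightarrow> b < a"
  by (auto simp: dep_def P0_def)

lemma dep_P1: "dep P1 a b \<Longrightarrow> b < a"
  by (auto simp: dep_def P1_def)

lemma IDB_mas_AS: "IDB_mas AS = P0 \<union> P1"
  by (auto simp: IDB_mas_def AS_def A0_def A1_def less_Suc_eq)

lemma dep_un: "dep (P0 \<union> P1) a b \<Longrightarrow> b < a"
proof -
  assume "dep (P0 \<union> P1) a b"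
  then have "dep P0 a b \<or> dep P1 a b" unfolding dep_def by blast
  then show ?thesis using dep_P0 dep_P1 by blast
qed

lemma no_desc:
  assumes "\<forall>k. (f::nat \<Rightarrow> nat) (Suc k) < f k"
  shows False
proof -
  have "f k + k \<le> f 0" for k
  proof (induction k)
    case (Suc k) then show ?case using assms[rule_format, of k] by simp
  qed simp
  from this[of "Suc (f 0)"] show False by simp
qed

lemma acyc_of:
  assumes h: "\<And>a b. dep (P :: nat program) a b \<Longrightarrow> b < a"
  shows "acyclic_prog P"
  unfolding acyclic_prog_def
proof
  assume "\<exists>f::nat \<Rightarrow> nat. \<forall>k. dep P (f k) (f (Suc k))"
  then obtain f :: "nat \<Rightarrow> nat" where "\<forall>k. dep P (f k) (f (Suc k))" by blast
  then have "\<forall>k. f (Suc k) < f k" using h by blast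
  then show False by (rule no_desc)
qed

lemma Dep10: "Dep AS (Suc 0) 0 = {x. even x}"
  using heads_P0 by (auto simp: Dep_def AS_def A0_def A1_def)
lemma Dep01: "Dep AS 0 (Suc 0) = {x. odd x}"
  using heads_P1 by (auto simp: Dep_def AS_def A0_def A1_def)
lemma Dep00: "Dep AS 0 0 = {}"
  using heads_P0 by (auto simp: Dep_def AS_def A0_def A1_def)
lemma Dep11: "Dep AS (Suc 0) (Suc 0) = {}"
  using heads_P1 by (auto simp: Dep_def AS_def A0_def A1_def)

lemma odd_le: "odd (n::nat) \<Longrightarrow> n \<le> 2*m \<Longrightarrow> Suc n \<le> 2*m"
  by presburger

lemma even_lt: "even (n::nat) \<Longrightarrow> n < 2*m \<Longrightarrow> Suc n < 2*m"
  by presburger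

lemma reduct_definite: "(\<forall>c\<in>P. cneg c = []) \<Longrightarrow> reduct P S = P"
proof
  assume h: "\<forall>c\<in>P. cneg c = []"
  show "reduct P S \<subseteq> P"
  proof
    fix c assume "c \<in> reduct P S"
    then obtain hd p n where c: "c = Clause hd p []" "Clause hd p n \<in> P"
      unfolding reduct_def by blast
    then have "n = []" using h by fastforce
    then show "c \<in> P" using c by simp
  qed
  show "P \<subseteq> reduct P S"
  proof
    fix c assume c: "c \<in> P"
    then have e: "c = Clause (chead c) (cpos c) []" using h by (metis clause.collapse)
    then have m: "Clause (chead c) (cpos c) [] \<in> P" using c by simp
    show "c \<in> reduct P S" unfolding reduct_def
      by (rule CollectI, rule exI[of _ "chead c"], rule exI[of _ "cpos c"], rule exI[of _ "[]"])
         (use e m in simp)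
  qed
qed

lemma agent_model_least:
  assumes "\<forall>c\<in>IDB A. cneg c = []"
  shows "agent_model A st = least_model (IDB A \<union> facts (fst st) \<union> facts (snd st))"
proof -
  let ?P = "IDB A \<union> facts (fst st) \<union> facts (snd st)"
  have d: "\<forall>c\<in>?P. cneg c = []" using assms by (auto simp: facts_def)
  have "stable_model ?P S \<longleftrightarrow> S = least_model ?P" for S
    unfolding stable_model_def using reduct_definite[OF d] by simp
  then show ?thesis unfolding agent_model_def by (intro the_equality) auto
qed

lemma least_eq:
  assumes "is_def_model P M" "\<And>I. is_def_model P I \<Longrightarrow> M \<subseteq> I"
  shows "least_model P = M"
  using assms unfolding least_model_def by blast

lemma model0: "agent_model A0 ({0}, {x. odd x \<and> x < 2*m}) = {..2*m}"
proof -
  let ?P = "P0 \<union> facts {0} \<union> facts {x. odd x \<and> x < 2*m}"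
  have "agent_model A0 ({0}, {x. odd x \<and> x < 2*m}) = least_model ?P"
    by (subst agent_model_least) (auto simp: A0_def P0_def)
  also have "\<dots> = {..2*m}"
  proof (rule least_eq)
    show "is_def_model ?P {..2*m}"
      unfolding is_def_model_def P0_def facts_def
      by (auto intro: odd_le)
    fix I assume I: "is_def_model ?P I"
    show "{..2*m} \<subseteq> I"
    proof
      fix x assume x: "x \<in> {..2*m}"
      have fact: "y \<in> I" if "Clause y [] [] \<in> ?P" for y
        using bspec[OF I[unfolded is_def_model_def] that] by simp
      have f: "y \<in> I" if "y = 0 \<or> (odd y \<and> y < 2*m)" for y
        using that by (intro fact) (auto simp: facts_def)
      show "x \<in> I"
      proof (cases "x = 0 \<or> odd x")
        case True then show ?thesis using f x odd_le[of x m] by auto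
      next
        case False
        then obtain n where n: "x = Suc n" "odd n" by (metis even_Suc not0_implies_Suc)
        then have "n \<in> I" using f x by auto
        moreover have cl: "Clause (Suc n) [n] [] \<in> ?P" using n by (auto simp: P0_def)
        ultimately show ?thesis using bspec[OF I[unfolded is_def_model_def] cl] n by simp
      qed
    qed
  qed
  finally show ?thesis .
qed

lemma model1: "agent_model A1 ({}, {x. even x \<and> x < 2*m}) = {x. x < 2*m}"
proof -
  let ?P = "P1 \<union> facts {} \<union> facts {x. even x \<and> x < 2*m}"
  have "agent_model A1 ({}, {x. even x \<and> x < 2*m}) = least_model ?P"
    by (subst agent_model_least) (auto simp: A1_def P1_def)
  also have "\<dots> = {x. x < 2*m}"
  proof (rule least_eq)
    show "is_def_model ?P {x. x < 2*m}"
      unfolding is_def_model_def P1_def facts_def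
      by (auto intro: even_lt)
    fix I assume I: "is_def_model ?P I"
    show "{x. x < 2*m} \<subseteq> I"
    proof
      fix x assume x: "x \<in> {x. x < 2*m}"
      have fact: "y \<in> I" if "Clause y [] [] \<in> ?P" for y
        using bspec[OF I[unfolded is_def_model_def] that] by simp
      have f: "y \<in> I" if "even y \<and> y < 2*m" for y
        using that by (intro fact) (auto simp: facts_def)
      show "x \<in> I"
      proof (cases "even x")
        case True then show ?thesis using f x by auto
      next
        case False
        then have "\<exists>n. x = Suc n \<and> even n" by presburger
        then obtain n where n: "x = Suc n" "even n" by blast
        then have "n \<in> I" using f x by auto
        moreover have cl: "Clause (Suc n) [n] [] \<in> ?P" using n by (auto simp: P1_def)
        ultimately show ?thesis using bspec[OF I[unfolded is_def_model_def] cl] n by simp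
      qed
    qed
  qed
  finally show ?thesis .
qed

lemma lenAS: "length AS = Suc (Suc 0)" by (simp add: AS_def)
lemma AS0: "AS ! 0 = A0" by (simp add: AS_def)
lemma AS1: "AS ! Suc 0 = A1" by (simp add: AS_def)

lemma setA: "({x. even x \<and> x < 2*m} - {x. even x}) \<union> ({x. even x} \<inter> {..2*m}) = {x::nat. even x \<and> x < 2*Suc m}"
proof -
  have "even x \<Longrightarrow> (x \<le> 2*m) = (x < 2*Suc m)" for x :: nat by presburger
  then show ?thesis by auto
qed

lemma setB: "({x. odd x \<and> x < 2*m} - {x. odd x}) \<union> ({x. odd x} \<inter> {x. x < 2*Suc m}) = {x::nat. odd x \<and> x < 2*Suc m}"
  by auto

lemma inv:
  "run_state AS labs (2*m) 0 = ({0}, {x. odd x \<and> x < 2*m}) \<and>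
   run_state AS labs (2*m) (Suc 0) = ({}, {x. even x \<and> x < 2*m})"
proof (induction m)
  case 0
  then show ?case by (simp add: AS_def A0_def A1_def)
next
  case (Suc m)
  have e: "2 * Suc m = Suc (Suc (2*m))" by simp
  have l1: "labs (2*m) = Comm 0 (Suc 0)" by (simp add: labs_def)
  have l2: "labs (Suc (2*m)) = Comm (Suc 0) 0" by (simp add: labs_def)
  let ?s = "run_state AS labs (2*m)"
  let ?s1 = "run_state AS labs (Suc (2*m))"
  have st1: "?s1 = step AS (Comm 0 (Suc 0)) ?s" using l1 by simp
  have am0: "agent_model (AS ! 0) (?s 0) = {..2*m}" using Suc.IH model0 by (simp add: AS_def)
  have s1a: "?s1 0 = ?s 0" unfolding st1 by simp
  have "?s1 (Suc 0) = (fst (?s (Suc 0)), (snd (?s (Suc 0)) - Dep AS (Suc 0) 0) \<union> (Dep AS (Suc 0) 0 \<inter> agent_model (AS ! 0) (?s 0)))"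
    unfolding st1 by simp
  also have "\<dots> = ({}, {x. even x \<and> x < 2*Suc m})"
    unfolding am0 Dep10 using Suc.IH setA[of m] by simp
  finally have s1b: "?s1 (Suc 0) = ({}, {x. even x \<and> x < 2*Suc m})" .
  have st2: "run_state AS labs (2 * Suc m) = step AS (Comm (Suc 0) 0) ?s1" using l2 e by simp
  have am1: "agent_model (AS ! Suc 0) (?s1 (Suc 0)) = {x. x < 2 * Suc m}"
    unfolding s1b AS1 by (rule model1)
  have "run_state AS labs (2 * Suc m) (Suc 0) = ?s1 (Suc 0)" unfolding st2 by simp
  moreover have "run_state AS labs (2 * Suc m) 0 = (fst (?s1 0), (snd (?s1 0) - Dep AS 0 (Suc 0)) \<union> (Dep AS 0 (Suc 0) \<inter> agent_model (AS ! Suc 0) (?s1 (Suc 0))))"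
    unfolding st2 by simp
  moreover have "\<dots> = ({0}, {x. odd x \<and> x < 2*Suc m})"
    unfolding am1 Dep01 s1a using Suc.IH setB[of m] by simp
  ultimately show ?case using s1b by simp
qed

lemma AS0': "AS ! 0 = A0" by (simp add: AS_def)

lemma Mod0: "Mod AS labs 0 (2*m) = {..2*m}"
  unfolding Mod_def AS0' using inv[of m] model0[of m] by simp

lemma run: "is_run AS labs"
  unfolding is_run_def
proof (intro conjI)
  show "\<forall>k i j. labs k = Comm j i \<longrightarrow> i < length AS \<and> j < length AS"
    unfolding lenAS labs_def by auto
  show "\<exists>k0. \<forall>k\<ge>k0. \<not> is_env (labs k)" by (auto simp: labs_def)
  have a: "\<exists>k'\<ge>k. labs k' = Comm 0 (Suc 0)" for k
    by (rule exI[of _ "2*k"]) (auto simp: labs_def)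
  have b: "\<exists>k'\<ge>k. labs k' = Comm (Suc 0) 0" for k
    by (rule exI[of _ "Suc (2*k)"]) (auto simp: labs_def)
  show "\<forall>i<length AS. \<forall>j<length AS. Dep AS i j \<noteq> {} \<longrightarrow> (\<forall>k. \<exists>k'\<ge>k. labs k' = Comm j i)"
    unfolding lenAS all_less_2 Dep00 Dep11 using a b by blast
qed

lemma not_sc: "\<not> strongly_convergent AS labs"
proof
  assume "strongly_convergent AS labs"
  then obtain k0 where k0: "\<forall>k\<ge>k0. \<forall>i<length AS. Mod AS labs i k = Mod AS labs i k0"
    unfolding strongly_convergent_def by blast
  have h: "Mod AS labs 0 k = Mod AS labs 0 k0" if "k \<ge> k0" for k
    using k0[rule_format, OF that, of 0] by (simp add: lenAS)
  have "Mod AS labs 0 (2*Suc k0) = Mod AS labs 0 (2*Suc (Suc k0))"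
    using h[of "2*Suc k0"] h[of "2*Suc (Suc k0)"] by simp
  then have e: "{..2*Suc k0} = {..2*Suc (Suc k0)}" by (simp only: Mod0)
  have "2*Suc (Suc k0) \<in> {..2*Suc (Suc k0)}" by simp
  then have "2*Suc (Suc k0) \<in> {..2*Suc k0}" by (simp only: e)
  then show False by simp
qed

lemma hdisj: "heads P0 \<inter> heads P1 = {}"
  unfolding heads_P0 heads_P1 by auto

lemma wf0: "wf_agent A0"
  unfolding wf_agent_def A0_def agent.simps
proof (intro conjI)
  show "acyclic_prog P0" by (rule acyc_of) (rule dep_P0)
qed (auto simp: heads_P0)

lemma wf1: "wf_agent A1"
  unfolding wf_agent_def A1_def agent.simps
proof (intro conjI)
  show "acyclic_prog P1" by (rule acyc_of) (rule dep_P1)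
qed (auto simp: heads_P1)

lemma IDB0: "IDB A0 = P0" by (simp add: A0_def)
lemma IDB1: "IDB A1 = P1" by (simp add: A1_def)

lemma coop: "coop_mas AS"
  unfolding coop_mas_def lenAS all_less_2 AS0 AS1 IDB0 IDB1
proof (intro conjI)
  show "wf_agent A0" by (rule wf0)
  show "wf_agent A1" by (rule wf1)
  show "HIN A0 \<subseteq> (\<Union>j<Suc (Suc 0). heads (IDB (AS ! j)) \<union> HBE (AS ! j))"
  proof -
    have "HIN A0 \<subseteq> heads (IDB (AS ! Suc 0))" by (simp add: AS1 IDB1 heads_P1 A0_def)
    then show ?thesis by blast
  qed
  show "HIN A1 \<subseteq> (\<Union>j<Suc (Suc 0). heads (IDB (AS ! j)) \<union> HBE (AS ! j))"
  proof -
    have "HIN A1 \<subseteq> heads (IDB (AS ! 0)) \<union> HBE (AS ! 0)" by (auto simp: AS0 IDB0 heads_P0 A0_def A1_def)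
    then show ?thesis by blast
  qed
qed (use hdisj in \<open>auto simp: A0_def A1_def heads_P0 heads_P1\<close>)

lemma bnd: "bounded_mas AS"
  unfolding bounded_mas_def bounded_prog_def IDB_mas_AS
proof
  fix a
  have "def_of (P0 \<union> P1) a \<subseteq> {Clause a [a - 1] []}"
    by (auto simp: def_of_def P0_def P1_def)
  then show "finite (def_of (P0 \<union> P1) a)" by (rule finite_subset) simp
qed

lemma ioa: "io_acyclic AS"
  unfolding io_acyclic_def io_edge_def IDB_mas_AS
proof
  assume "\<exists>f::nat \<Rightarrow> nat. \<forall>k. f k \<in> io_nodes AS \<and> f (Suc k) \<in> io_nodes AS \<and> dep (P0 \<union> P1) (f k) (f (Suc k))"
  then obtain f :: "nat \<Rightarrow> nat" where "\<forall>k. dep (P0 \<union> P1) (f k) (f (Suc k))" by blast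
  then have "\<forall>k. f (Suc k) < f k" using dep_un by blast
  then show False by (rule no_desc)
qed

lemma nstab: "\<not> stabilizing AS"
  using run not_sc unfolding stabilizing_def by blast

theorem theorem2:
  shows "\<exists>As :: nat mas. coop_mas As \<and> io_acyclic As \<and> bounded_mas As \<and> \<not> stabilizing As"
  using coop ioa bnd nstab by blast

end
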